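(* Let $w=w_1\cdots w_n$ be a word of length $n\ge 2$ such that each letter appears at most $k$ times in $w$, and such that there are exactly $s$ indices $i\in[n]$ with $w_i=w_{n-i+1}$. Then $f(w)\le \max\{n+2k-s,\,n\}+2$.
   Context: A word of length $n$ is a sequence $w=w_1w_2\cdots w_n$ of letters (symbols). Let $[n]=\{1,\dots,n\}$. An $n$-grid is a function $G:[n]^2\to\Sigma$, where $\Sigma$ is an arbitrary set of letters. The $i$th row of $G$ contains $w$ if $G(i,j)=w_j$ for all $1\le j\le n$, or $G(i,j)=w_{n-j+1}$ for all $1\le j\le n$. The $j$th column contains $w$ if $G(i,j)=w_i$ for all $i$, or $G(i,j)=w_{n-i+1}$ for all $i$. The main diagonal contains $w$ if $G(i,i)=w_i$ for all $i$ or $G(i,i)=w_{n-i+1}$ for all $i$; the anti-diagonal contains $w$ if $G(i,n-i+1)=w_i$ for all $i$ or $G(i,n-i+1)=w_{n-i+1}$ for all $i$. Let $f(w,G)$ be the number of the $2n+2$ lines ($n$ rows, $n$ columns, $2$ diagonals) of $G$ that contain $w$, and $f(w)=\max_G f(w,G)$ over all $n$-grids $G$. *)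

theory Defs
  imports Main
begin

(* A word w = w_1 ... w_n is a list; w_i is  w ! (i - 1).
   An n-grid is a function G :: nat => nat => 'a, only its values on [n]^2 matter. *)

definition letter :: "'a list \<Rightarrow> nat \<Rightarrow> 'a" where
  "letter w i = w ! (i - 1)"

definition row_contains :: "'a list \<Rightarrow> (nat \<Rightarrow> nat \<Rightarrow> 'a) \<Rightarrow> nat \<Rightarrow> bool" where
  "row_contains w G i \<longleftrightarrow> (let n = length w in
     (\<forall>j\<in>{1..n}. G i j = letter w j) \<or> (\<forall>j\<in>{1..n}. G i j = letter w (n - j + 1)))"

definition col_contains :: "'a list \<Rightarrow> (nat \<Rightarrow> nat \<Rightarrow> 'a) \<Rightarrow> nat \<Rightarrow> bool" where
  "col_contains w G j \<longleftrightarrow> (let n = length w in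
     (\<forall>i\<in>{1..n}. G i j = letter w i) \<or> (\<forall>i\<in>{1..n}. G i j = letter w (n - i + 1)))"

definition diag_contains :: "'a list \<Rightarrow> (nat \<Rightarrow> nat \<Rightarrow> 'a) \<Rightarrow> bool" where
  "diag_contains w G \<longleftrightarrow> (let n = length w in
     (\<forall>i\<in>{1..n}. G i i = letter w i) \<or> (\<forall>i\<in>{1..n}. G i i = letter w (n - i + 1)))"

definition antidiag_contains :: "'a list \<Rightarrow> (nat \<Rightarrow> nat \<Rightarrow> 'a) \<Rightarrow> bool" where
  "antidiag_contains w G \<longleftrightarrow> (let n = length w in
     (\<forall>i\<in>{1..n}. G i (n - i + 1) = letter w i) \<or>
     (\<forall>i\<in>{1..n}. G i (n - i + 1) = letter w (n - i + 1)))"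

definition fG :: "'a list \<Rightarrow> (nat \<Rightarrow> nat \<Rightarrow> 'a) \<Rightarrow> nat" where
  "fG w G = card {i\<in>{1..length w}. row_contains w G i}
          + card {j\<in>{1..length w}. col_contains w G j}
          + (if diag_contains w G then 1 else 0)
          + (if antidiag_contains w G then 1 else 0)"

(* f(w) = max over all n-grids (the set is bounded by 2n+2, hence finite) *)
definition f :: "'a list \<Rightarrow> nat" where
  "f w = Max (range (fG w))"

end

theory Submission
  imports Defs
begin

lemma card_refl:
  "card {j\<in>{1..n::nat}. P (n - j + 1)} = card {j\<in>{1..n}. P j}"
proof -
  have "{j\<in>{1..n::nat}. P (n - j + 1)} = (\<lambda>j. n - j + 1) ` {j\<in>{1..n}. P j}"
  proof (rule set_eqI, rule iffI)
    fix x assume "x \<in> {j\<in>{1..n::nat}. P (n - j + 1)}"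
    then show "x \<in> (\<lambda>j. n - j + 1) ` {j\<in>{1..n}. P j}"
      by (intro image_eqI[where x="n - x + 1"]) auto
  qed auto
  moreover have "inj_on (\<lambda>j. n - j + 1) {j\<in>{1..n::nat}. P j}"
    by (auto simp: inj_on_def)
  ultimately show ?thesis by (simp add: card_image)
qed

lemma col_bound_gen:
  assumes hk: "\<forall>c. card {j\<in>{1..n::nat}. letter w (g j) = c} \<le> k"
    and sub: "C \<subseteq> {j\<in>{1..n}. letter w (g j) = a} \<union> {j\<in>{1..n}. letter w (g j) = b}"
  shows "card C \<le> (if a = b then k else 2 * k)"
proof -
  have fin: "finite ({j\<in>{1..n}. letter w (g j) = a} \<union> {j\<in>{1..n}. letter w (g j) = b})" by simp
  have "card C \<le> card ({j\<in>{1..n}. letter w (g j) = a} \<union> {j\<in>{1..n}. letter w (g j) = b})"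
    using card_mono[OF fin sub] .
  also have "\<dots> \<le> card {j\<in>{1..n}. letter w (g j) = a} + card {j\<in>{1..n}. letter w (g j) = b}"
    by (rule card_Un_le)
  finally have 1: "card C \<le> card {j\<in>{1..n}. letter w (g j) = a} + card {j\<in>{1..n}. letter w (g j) = b}" .
  show ?thesis
  proof (cases "a = b")
    case True
    then have "card C \<le> card {j\<in>{1..n}. letter w (g j) = a}"
      using card_mono[OF fin sub] by simp
    moreover have "card {j\<in>{1..n}. letter w (g j) = a} \<le> k" using hk by blast
    ultimately show ?thesis using True by simp
  next
    case False
    have "card {j\<in>{1..n}. letter w (g j) = a} \<le> k" "card {j\<in>{1..n}. letter w (g j) = b} \<le> k"
      using hk by blast+
    then show ?thesis using 1 False by simp
  qed
qed

lemma row_bound: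
  assumes len: "length w = n"
    and hk: "\<forall>a. card {i\<in>{1..n}. letter w i = a} \<le> k"
    and i0: "i0 \<in> {1..n}" and row: "row_contains w G i0"
  shows "card {j\<in>{1..n}. col_contains w G j}
           \<le> (if letter w i0 = letter w (n - i0 + 1) then k else 2 * k)"
proof -
  let ?a = "letter w i0" and ?b = "letter w (n - i0 + 1)"
  have colv: "G i0 j = ?a \<or> G i0 j = ?b" if "j \<in> {1..n}" "col_contains w G j" for j
    using that i0 len unfolding col_contains_def Let_def by auto
  from row len consider (id) "\<forall>j\<in>{1..n}. G i0 j = letter w j"
    | (rv) "\<forall>j\<in>{1..n}. G i0 j = letter w (n - j + 1)"
    unfolding row_contains_def Let_def by auto
  then show ?thesis
  proof cases
    case id
    have hk': "\<forall>c. card {j\<in>{1..n::nat}. letter w (id j) = c} \<le> k" using hk by simp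
    have "{j\<in>{1..n}. col_contains w G j} \<subseteq>
       {j\<in>{1..n}. letter w (id j) = ?a} \<union> {j\<in>{1..n}. letter w (id j) = ?b}"
      using colv id by auto
    from col_bound_gen[OF hk' this] show ?thesis .
  next
    case rv
    have hk': "\<forall>c. card {j\<in>{1..n::nat}. letter w ((\<lambda>j. n - j + 1) j) = c} \<le> k"
    proof
      fix c
      show "card {j\<in>{1..n::nat}. letter w ((\<lambda>j. n - j + 1) j) = c} \<le> k"
        using hk card_refl[where n=n and P="\<lambda>i. letter w i = c"] by simp
    qed
    have "{j\<in>{1..n}. col_contains w G j} \<subseteq>
       {j\<in>{1..n}. letter w ((\<lambda>j. n - j + 1) j) = ?a} \<union> {j\<in>{1..n}. letter w ((\<lambda>j. n - j + 1) j) = ?b}"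
      using colv rv by auto
    from col_bound_gen[OF hk' this] show ?thesis .
  qed
qed

lemma transp_row: "row_contains w (\<lambda>i j. G j i) i = col_contains w G i"
  unfolding row_contains_def col_contains_def by simp
lemma transp_col: "col_contains w (\<lambda>i j. G j i) i = row_contains w G i"
  unfolding row_contains_def col_contains_def by simp

lemma fG_le: "fG w G \<le> 2 * length w + 2"
proof -
  have "card {i\<in>{1..length w}. row_contains w G i} \<le> card {1..length w}"
    by (rule card_mono) auto
  moreover have "card {i\<in>{1..length w}. col_contains w G i} \<le> card {1..length w}"
    by (rule card_mono) auto
  ultimately show ?thesis unfolding fG_def by simp
qed

theorem lemma13:
  fixes w :: "'a list" and n k s :: nat
  assumes "length w = n" and "n \<ge> 2"
    and "\<forall>a. card {i\<in>{1..n}. letter w i = a} \<le> k"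
    and "card {i\<in>{1..n}. letter w i = letter w (n - i + 1)} = s"
  shows "int (f w) \<le> max (int n + 2 * int k - int s) (int n) + 2"
proof -
  note len = assms(1) and hk = assms(3) and hs = assms(4)
  define S where "S = {i\<in>{1..n}. letter w i = letter w (n - i + 1)}"
  have "S \<subseteq> {1..n}" unfolding S_def by blast
  then have sle: "s \<le> n" using hs card_mono[of "{1..n}" S] unfolding S_def by simp
  have nS: "card {i\<in>{1..n}. \<not> (letter w i = letter w (n - i + 1))} = n - s"
  proof -
    have "{i\<in>{1..n}. \<not> (letter w i = letter w (n - i + 1))} = {1..n} - S"
      unfolding S_def by auto
    moreover have "S \<subseteq> {1..n}" unfolding S_def by auto
    ultimately show ?thesis using hs card_Diff_subset[of S "{1..n}"] unfolding S_def
      by (simp add: S_def)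
  qed
  have main: "int (fG w G) \<le> max (int n + 2 * int k - int s) (int n) + 2" for G
  proof -
    define R where "R = {i\<in>{1..n}. row_contains w G i}"
    define C where "C = {j\<in>{1..n}. col_contains w G j}"
    have "R \<subseteq> {1..n}" unfolding R_def by blast
    then have Rn: "card R \<le> n" using card_mono[of "{1..n}" R] by simp
    have "C \<subseteq> {1..n}" unfolding C_def by blast
    then have Cn: "card C \<le> n" using card_mono[of "{1..n}" C] by simp
    have key: "card R + card C \<le> max (n + 2 * k - s) n"
    proof (cases "R = {} \<or> C = {}")
      case True
      then show ?thesis using Rn Cn by auto
    next
      case False
      then obtain i0 j0 where i0: "i0 \<in> R" and j0: "j0 \<in> C" by auto
      have Cb: "card C \<le> (if letter w i \<noteq> letter w (n - i + 1) then 2 * k else k)" if "i \<in> R" for i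
        using row_bound[OF len hk, of i G] that unfolding R_def C_def by auto
      have hkT: "\<forall>a. card {i\<in>{1..n}. letter w i = a} \<le> k" using hk .
      have Rb: "card R \<le> (if letter w j \<noteq> letter w (n - j + 1) then 2 * k else k)" if "j \<in> C" for j
      proof -
        have jr: "j \<in> {1..n}" "row_contains w (\<lambda>i j. G j i) j"
          using that unfolding C_def transp_row by auto
        have "card {i\<in>{1..n}. col_contains w (\<lambda>i j. G j i) i}
           \<le> (if letter w j = letter w (n - j + 1) then k else 2 * k)"
          by (rule row_bound[OF len hk jr])
        then show ?thesis unfolding transp_col R_def by (simp split: if_splits)
      qed
      have C2: "card C \<le> 2 * k" using Cb[OF i0] by (auto split: if_splits)
      have R2: "card R \<le> 2 * k" using Rb[OF j0] by (auto split: if_splits)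
      show ?thesis
      proof (cases "\<exists>i\<in>R. letter w i = letter w (n - i + 1)")
        case False
        then have "R \<subseteq> {i\<in>{1..n}. \<not> (letter w i = letter w (n - i + 1))}"
          unfolding R_def by auto
        then have "card R \<le> n - s" using nS card_mono[of "{i\<in>{1..n}. \<not> (letter w i = letter w (n - i + 1))}" R] by simp
        then show ?thesis using C2 sle by simp
      next
        case True
        then obtain i1 where i1: "i1 \<in> R" "letter w i1 = letter w (n - i1 + 1)" by auto
        have Ck: "card C \<le> k" using Cb[OF i1(1)] i1(2) by simp
        show ?thesis
        proof (cases "\<exists>j\<in>C. letter w j = letter w (n - j + 1)")
          case False
          then have "C \<subseteq> {i\<in>{1..n}. \<not> (letter w i = letter w (n - i + 1))}"
            unfolding C_def by auto
          then have "card C \<le> n - s" using nS card_mono[of "{i\<in>{1..n}. \<not> (letter w i = letter w (n - i + 1))}" C] by simp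
          then show ?thesis using R2 sle by simp
        next
          case True
          then obtain j1 where j1: "j1 \<in> C" "letter w j1 = letter w (n - j1 + 1)" by auto
          have "card R \<le> k" using Rb[OF j1(1)] j1(2) by simp
          then show ?thesis using Ck sle by simp
        qed
      qed
    qed
    have "fG w G \<le> card R + card C + 2"
      unfolding fG_def R_def C_def using len by simp
    then show ?thesis using key sle by linarith
  qed
  have fin: "finite (range (fG w))"
  proof (rule finite_subset)
    show "range (fG w) \<subseteq> {..2 * length w + 2}" using fG_le by blast
  qed simp
  have "f w \<in> range (fG w)" unfolding f_def by (rule Max_in[OF fin]) auto
  then obtain G where "f w = fG w G" by auto
  then show ?thesis using main[of G] by simp
qed

end
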